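(* Let $\mathbf{A}=(\mathcal{P},\mathcal{L},\parallel)$ be an affine space over $\mathrm{GF}(2)$ of countably infinite dimension, and let $\mathbf{A}'=(\mathcal{P}',\mathcal{L}',\parallel')$ be an $m$-dimensional affine space, $3\le m\le\aleph_0$, over a countably infinite (skew) field $F'$ of arbitrary characteristic. Then there exists a bijection $\varphi:\mathcal{L}\to\mathcal{L}'$ satisfying $a\sim b\implies a^\varphi\sim' b^\varphi$ for all $a,b\in\mathcal{L}$ such that the associated injection $\lambda:\mathcal{P}\to\mathcal{P}'$, $a\cap b\mapsto a^\varphi\cap b^\varphi$ ($a,b\in\mathcal{L}$ adjacent), is not surjective; indeed, $\varphi$ can be chosen so that there is a set $\mathcal{B}'\subseteq\mathcal{P}'$ containing no three collinear points and meeting every line of $\mathbf{A}'$ in exactly two points, with $\lambda(\mathcal{P})=\mathcal{B}'$.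
   Context: In an affine space, lines $a,b$ are related, $a\sim b$, if $a\cap b\ne\emptyset$, and adjacent if related and distinct; analogously $\sim'$ in $\mathbf{A}'$. In an affine space over $\mathrm{GF}(2)$ every line consists of exactly two points, so lines of $\mathbf{A}$ are exactly the 2-subsets of $\mathcal{P}$. *)

theory Defs
  imports Main "HOL-Library.Z2" "HOL-Library.Countable_Set"
begin

text \<open>Coordinate model of the affine space of dimension |I| over a (skew) field F
  (left vector space): points are finitely supported functions I \<rightarrow> F
  (zero outside I); lines are the sets p + F v with v a nonzero vector.\<close>

definition aff_points :: "'i set \<Rightarrow> ('i \<Rightarrow> 'f::division_ring) set" where
  "aff_points I = {x. finite {i. x i \<noteq> 0} \<and> (\<forall>i. i \<notin> I \<longrightarrow> x i = 0)}"

definition aff_line :: "('i \<Rightarrow> 'f::division_ring) \<Rightarrow> ('i \<Rightarrow> 'f) \<Rightarrow> ('i \<Rightarrow> 'f) set" where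
  "aff_line p v = {(\<lambda>i. p i + t * v i) | t. True}"

definition aff_lines :: "'i set \<Rightarrow> ('i \<Rightarrow> 'f::division_ring) set set" where
  "aff_lines I = {aff_line p v | p v. p \<in> aff_points I \<and> v \<in> aff_points I \<and> v \<noteq> (\<lambda>_. 0)}"

end

theory Submission
  imports Defs
begin

definition good :: "'a set set \<Rightarrow> 'a set \<Rightarrow> bool" where
 "good L B \<longleftrightarrow> (\<forall>m\<in>L. card (B \<inter> m) \<le> 2)"

lemma add_point:
  assumes sub: "\<forall>l\<in>L. infinite l"
    and uniq: "\<forall>l\<in>L. \<forall>m\<in>L. \<forall>x y. x \<noteq> y \<and> x \<in> l \<and> y \<in> l \<and> x \<in> m \<and> y \<in> m \<longrightarrow> l = m"
    and fB: "finite B" and gB: "good L B" and lL: "l \<in> L" and cl: "card (B \<inter> l) < 2"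
  shows "\<exists>x\<in>l. x \<notin> B \<and> good L (insert x B)"
proof -
  define M where "M = {m\<in>L. card (B \<inter> m) = 2}"
  have "inj_on (\<lambda>m. B \<inter> m) M"
  proof (rule inj_onI)
    fix m m' assume m: "m \<in> M" and m': "m' \<in> M" and e: "B \<inter> m = B \<inter> m'"
    from m have "card (B \<inter> m) = 2" by (simp add: M_def)
    then obtain x y where "x \<noteq> y" "B \<inter> m = {x,y}" by (meson card_2_iff)
    then show "m = m'" using uniq m m' e unfolding M_def by blast
  qed
  moreover have "(\<lambda>m. B \<inter> m) ` M \<subseteq> Pow B" by auto
  ultimately have fM: "finite M" using fB
    by (meson finite_Pow_iff finite_imageD finite_subset)
  define Bad where "Bad = (\<Union>m\<in>M - {l}. m \<inter> l)"
  have "finite (m \<inter> l)" if "m \<in> M - {l}" for m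
  proof -
    have "\<forall>x\<in>m\<inter>l. \<forall>y\<in>m\<inter>l. x = y" using uniq that lL unfolding M_def by blast
    then have "m \<inter> l = {} \<or> (\<exists>z. m \<inter> l = {z})" by blast
    then show ?thesis by auto
  qed
  then have fBad: "finite Bad" unfolding Bad_def
    by (intro finite_UN_I) (use fM in auto)
  have "infinite (l - (B \<union> Bad))" using sub lL fB fBad by (meson Diff_infinite_finite finite_UnI)
  then obtain x where x: "x \<in> l" "x \<notin> B" "x \<notin> Bad"
    by (metis Diff_iff UnCI finite.emptyI set_empty2 ex_in_conv)
  have "good L (insert x B)" unfolding good_def
  proof
    fix m assume mL: "m \<in> L"
    show "card (insert x B \<inter> m) \<le> 2"
    proof (cases "x \<in> m")
      case False
      then have "insert x B \<inter> m = B \<inter> m" by auto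
      then show ?thesis using gB mL by (simp add: good_def)
    next
      case True
      then have e: "insert x B \<inter> m = insert x (B \<inter> m)" by auto
      have "card (B \<inter> m) \<noteq> 2"
      proof
        assume c: "card (B \<inter> m) = 2"
        then have "m \<noteq> l" using cl by auto
        then have "m \<in> M - {l}" using c mL by (simp add: M_def)
        then show False using x True unfolding Bad_def by blast
      qed
      then have "card (B \<inter> m) \<le> 1" using gB mL by (auto simp: good_def)
      then show ?thesis using e fB x(2) by (simp add: card_insert_if)
    qed
  qed
  then show ?thesis using x by blast
qed

lemma step_k:
  assumes sub: "\<forall>l\<in>L. l \<subseteq> P \<and> infinite l"
    and uniq: "\<forall>l\<in>L. \<forall>m\<in>L. \<forall>x y. x \<noteq> y \<and> x \<in> l \<and> y \<in> l \<and> x \<in> m \<and> y \<in> m \<longrightarrow> l = m"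
    and lL: "l \<in> L"
  shows "finite B \<Longrightarrow> B \<subseteq> P \<Longrightarrow> good L B \<Longrightarrow> card (B \<inter> l) + k = 2 \<Longrightarrow>
    \<exists>B'. finite B' \<and> B \<subseteq> B' \<and> B' \<subseteq> P \<and> good L B' \<and> card (B' \<inter> l) = 2"
proof (induction k arbitrary: B)
  case 0
  then show ?case by auto
next
  case (Suc k)
  have "\<forall>l\<in>L. infinite l" using sub by blast
  from add_point[OF this uniq Suc.prems(1,3) lL] Suc.prems(4)
  obtain x where x: "x \<in> l" "x \<notin> B" "good L (insert x B)" by auto
  have "insert x B \<inter> l = insert x (B \<inter> l)" using x by auto
  then have "card (insert x B \<inter> l) + k = 2" using Suc.prems x by simp
  moreover have "insert x B \<subseteq> P" using sub lL x Suc.prems by auto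
  ultimately obtain B' where "finite B' \<and> insert x B \<subseteq> B' \<and> B' \<subseteq> P \<and> good L B' \<and> card (B' \<inter> l) = 2"
    using Suc.IH[of "insert x B"] Suc.prems x by auto
  then show ?case by blast
qed

lemma step:
  assumes sub: "\<forall>l\<in>L. l \<subseteq> P \<and> infinite l"
    and uniq: "\<forall>l\<in>L. \<forall>m\<in>L. \<forall>x y. x \<noteq> y \<and> x \<in> l \<and> y \<in> l \<and> x \<in> m \<and> y \<in> m \<longrightarrow> l = m"
    and lL: "l \<in> L" and B: "finite B" "B \<subseteq> P" "good L B"
  shows "\<exists>B'. finite B' \<and> B \<subseteq> B' \<and> B' \<subseteq> P \<and> good L B' \<and> card (B' \<inter> l) = 2"
proof -
  have "card (B \<inter> l) \<le> 2" using B lL by (simp add: good_def)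
  then have "card (B \<inter> l) + (2 - card (B \<inter> l)) = 2" by simp
  then show ?thesis using step_k[OF sub uniq lL B] by blast
qed

fun bseq :: "'a set set \<Rightarrow> 'a set \<Rightarrow> nat \<Rightarrow> 'a set" where
  "bseq L P 0 = {}"
| "bseq L P (Suc n) = (SOME B'. finite B' \<and> bseq L P n \<subseteq> B' \<and> B' \<subseteq> P \<and> good L B'
       \<and> card (B' \<inter> from_nat_into L n) = 2)"

lemma two_set:
  assumes sub: "\<forall>l\<in>L. l \<subseteq> P \<and> infinite l"
    and uniq: "\<forall>l\<in>L. \<forall>m\<in>L. \<forall>x y. x \<noteq> y \<and> x \<in> l \<and> y \<in> l \<and> x \<in> m \<and> y \<in> m \<longrightarrow> l = m"
    and cL: "countable L" and ne: "L \<noteq> {}"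
  shows "\<exists>B. B \<subseteq> P \<and> (\<forall>l\<in>L. finite (B \<inter> l) \<and> card (B \<inter> l) = 2)"
proof -
  let ?S = "bseq L P"
  have inv: "finite (?S n) \<and> ?S n \<subseteq> P \<and> good L (?S n)" for n
  proof (induction n)
    case 0 then show ?case by (simp add: good_def)
  next
    case (Suc n)
    from step[OF sub uniq from_nat_into[OF ne, of n]] Suc
    have "\<exists>B'. finite B' \<and> ?S n \<subseteq> B' \<and> B' \<subseteq> P \<and> good L B' \<and> card (B' \<inter> from_nat_into L n) = 2"
      by blast
    from someI_ex[OF this] show ?case by simp
  qed
  have st: "?S n \<subseteq> ?S (Suc n) \<and> card (?S (Suc n) \<inter> from_nat_into L n) = 2" for n
  proof -
    from step[OF sub uniq from_nat_into[OF ne, of n]] inv[of n]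
    have "\<exists>B'. finite B' \<and> ?S n \<subseteq> B' \<and> B' \<subseteq> P \<and> good L B' \<and> card (B' \<inter> from_nat_into L n) = 2"
      by blast
    from someI_ex[OF this] show ?thesis by simp
  qed
  have mono: "m \<le> n \<Longrightarrow> ?S m \<subseteq> ?S n" for m n
    using lift_Suc_mono_le[of ?S] st by blast
  define B where "B = (\<Union>n. ?S n)"
  have fin: "finite F \<Longrightarrow> F \<subseteq> B \<Longrightarrow> \<exists>n. F \<subseteq> ?S n" for F
  proof (induction F rule: finite_induct)
    case empty then show ?case by simp
  next
    case (insert x F)
    then obtain n where n: "F \<subseteq> ?S n" by auto
    from insert obtain k where k: "x \<in> ?S k" unfolding B_def by auto
    have "F \<subseteq> ?S (max n k)" "x \<in> ?S (max n k)" using n k mono[of n "max n k"] mono[of k "max n k"] by auto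
    then show ?case by blast
  qed
  have le2: "finite (B \<inter> l) \<and> card (B \<inter> l) \<le> 2" if lL: "l \<in> L" for l
  proof -
    have c: "card F \<le> 2" if fF: "finite F" and sF: "F \<subseteq> B \<inter> l" for F
    proof -
      obtain n where "F \<subseteq> ?S n" using fin[of F] fF sF by blast
      then have "F \<subseteq> ?S n \<inter> l" using sF by auto
      then have "card F \<le> card (?S n \<inter> l)" using inv[of n] by (simp add: card_mono)
      also have "\<dots> \<le> 2" using inv[of n] lL by (simp add: good_def)
      finally show ?thesis .
    qed
    have "finite (B \<inter> l)"
    proof (rule ccontr)
      assume "infinite (B \<inter> l)"
      then obtain F where "finite F" "card F = 3" "F \<subseteq> B \<inter> l"
        using infinite_arbitrarily_large by blast
      then show False using c by fastforce
    qed
    then show ?thesis using c by blast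
  qed
  have "B \<subseteq> P" using inv unfolding B_def by blast
  moreover have "card (B \<inter> l) = 2" if lL: "l \<in> L" for l
  proof -
    obtain n where n: "l = from_nat_into L n" using from_nat_into_surj[OF cL lL] by metis
    have "?S (Suc n) \<inter> l \<subseteq> B \<inter> l" unfolding B_def by blast
    then have "2 \<le> card (B \<inter> l)" using st[of n] n le2[OF lL] by (metis card_mono)
    then show ?thesis using le2[OF lL] by simp
  qed
  ultimately show ?thesis using le2 by blast
qed

lemma abstract_main:
  fixes L :: "'a set set" and P :: "'a set" and L' :: "'b set set" and P' :: "'b set"
  assumes L2: "\<forall>a\<in>L. a \<subseteq> P \<and> card a = 2"
    and Lex: "\<forall>p\<in>P. \<forall>q\<in>P. p \<noteq> q \<longrightarrow> (\<exists>a\<in>L. p \<in> a \<and> q \<in> a)"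
    and cP: "countable P" and iP: "infinite P"
    and sub: "\<forall>l\<in>L'. l \<subseteq> P' \<and> infinite l"
    and ex': "\<forall>x\<in>P'. \<forall>y\<in>P'. x \<noteq> y \<longrightarrow> (\<exists>l\<in>L'. x \<in> l \<and> y \<in> l)"
    and uniq: "\<forall>l\<in>L'. \<forall>m\<in>L'. \<forall>x y. x \<noteq> y \<and> x \<in> l \<and> y \<in> l \<and> x \<in> m \<and> y \<in> m \<longrightarrow> l = m"
    and cL: "countable L'" and iL: "infinite L'"
  shows "\<exists>\<phi> lam B'. bij_betw \<phi> L L' \<and>
     (\<forall>a \<in> L. \<forall>b \<in> L. a \<inter> b \<noteq> {} \<longrightarrow> \<phi> a \<inter> \<phi> b \<noteq> {}) \<and>
     (\<forall>a \<in> L. \<forall>b \<in> L. \<forall>p. a \<noteq> b \<and> p \<in> a \<and> p \<in> b \<longrightarrow> \<phi> a \<inter> \<phi> b = {lam p}) \<and>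
     inj_on lam P \<and> lam ` P \<noteq> P' \<and> B' \<subseteq> P' \<and>
     (\<forall>l \<in> L'. \<not> (\<exists>x y z. x \<in> B' \<inter> l \<and> y \<in> B' \<inter> l \<and> z \<in> B' \<inter> l \<and>
                                  x \<noteq> y \<and> y \<noteq> z \<and> x \<noteq> z)) \<and>
     (\<forall>l \<in> L'. card (B' \<inter> l) = 2) \<and> lam ` P = B'"
proof -
  have ne: "L' \<noteq> {}" using iL by auto
  have sub2: "\<forall>l\<in>L'. l \<subseteq> P'" "\<forall>l\<in>L'. infinite l" using sub by auto
  obtain B where BP: "B \<subseteq> P'" and B2: "\<forall>l\<in>L'. finite (B \<inter> l) \<and> card (B \<inter> l) = 2"
    using two_set[OF sub uniq cL ne] by blast
  have injB: "inj_on (\<lambda>l. B \<inter> l) L'"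
  proof (rule inj_onI)
    fix m m' assume m: "m \<in> L'" and m': "m' \<in> L'" and e: "B \<inter> m = B \<inter> m'"
    from m B2 obtain x y where "x \<noteq> y" "B \<inter> m = {x,y}" by (meson card_2_iff)
    then show "m = m'" using uniq m m' e by blast
  qed
  have iB: "infinite B"
  proof
    assume "finite B"
    moreover have "(\<lambda>l. B \<inter> l) ` L' \<subseteq> Pow B" by auto
    ultimately have "finite L'" using injB by (meson finite_Pow_iff finite_imageD finite_subset)
    then show False using iL by simp
  qed
  have cB: "countable B"
  proof -
    have "B \<subseteq> (\<Union>l\<in>L'. B \<inter> l)"
    proof
      fix x assume xB: "x \<in> B"
      obtain l0 where l0: "l0 \<in> L'" using ne by auto
      then have "infinite l0" using sub by auto
      then have "infinite (l0 - {x})" by simp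
      then obtain y where "y \<in> l0 - {x}" using infinite_imp_nonempty by blast
      then have y: "y \<in> l0" "y \<noteq> x" by auto
      have "y \<in> P'" using y l0 sub by auto
      then obtain l where "l \<in> L'" "x \<in> l" using ex' xB BP y by blast
      then show "x \<in> (\<Union>l\<in>L'. B \<inter> l)" using xB by blast
    qed
    moreover have "countable (\<Union>l\<in>L'. B \<inter> l)"
      using cL B2 by (intro countable_UN) (auto intro: countable_finite)
    ultimately show ?thesis by (rule countable_subset)
  qed
  define g where "g = from_nat_into B \<circ> to_nat_on P"
  have bg: "bij_betw g P B" unfolding g_def
    using bij_betw_trans[OF to_nat_on_infinite[OF cP iP] bij_betw_from_nat_into[OF cB iB]] .
  then have ig: "inj_on g P" and gP: "g ` P = B" by (auto simp: bij_betw_def)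
  define \<phi> where "\<phi> a = (THE l. l \<in> L' \<and> g ` a \<subseteq> l)" for a
  have F1: "\<phi> a \<in> L' \<and> B \<inter> \<phi> a = g ` a" if aL: "a \<in> L" for a
  proof -
    have a2: "card a = 2" "a \<subseteq> P" using L2 aL by auto
    obtain p q where pq: "p \<noteq> q" "a = {p,q}" using a2(1) by (meson card_2_iff)
    have pP: "p \<in> P" "q \<in> P" using a2(2) pq(2) by auto
    have gne: "g p \<noteq> g q" using inj_onD[OF ig _ pP] pq(1) by blast
    have gP': "g p \<in> P'" "g q \<in> P'" using gP BP pP by auto
    obtain l where l: "l \<in> L'" "g p \<in> l" "g q \<in> l" using ex' gP'(1) gP'(2) gne by blast
    have ga: "g ` a = {g p, g q}" using pq(2) by simp
    have "\<exists>!l. l \<in> L' \<and> g ` a \<subseteq> l"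
    proof
      show "l \<in> L' \<and> g ` a \<subseteq> l" using l ga by simp
      fix m assume "m \<in> L' \<and> g ` a \<subseteq> m"
      then have "g p \<in> m" "g q \<in> m" "m \<in> L'" using ga by auto
      then show "m = l" using uniq l gne by blast
    qed
    then have ph: "\<phi> a \<in> L' \<and> g ` a \<subseteq> \<phi> a" unfolding \<phi>_def by (rule theI')
    have "g ` a \<subseteq> B" using gP a2(2) by blast
    then have sub1: "g ` a \<subseteq> B \<inter> \<phi> a" using ph by blast
    have c1: "card (g ` a) = 2" using ga gne by simp
    have f2: "finite (B \<inter> \<phi> a)" and c2: "card (B \<inter> \<phi> a) = 2" using B2 ph by auto
    have "g ` a = B \<inter> \<phi> a" using card_subset_eq[OF f2 sub1] c1 c2 by simp
    then show ?thesis using ph by simp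
  qed
  have injphi: "inj_on \<phi> L"
  proof (rule inj_onI)
    fix a b assume a: "a \<in> L" and b: "b \<in> L" and e: "\<phi> a = \<phi> b"
    then have "g ` a = g ` b" using F1[OF a] F1[OF b] by simp
    moreover have "a \<subseteq> P" "b \<subseteq> P" using L2 a b by auto
    ultimately show "a = b" using ig by (simp add: inj_on_image_eq_iff)
  qed
  have surj: "\<phi> ` L = L'"
  proof
    show "\<phi> ` L \<subseteq> L'" using F1 by auto
    show "L' \<subseteq> \<phi> ` L"
    proof
      fix m assume m: "m \<in> L'"
      from m B2 obtain x y where xy: "x \<noteq> y" "B \<inter> m = {x,y}" by (meson card_2_iff)
      define p where "p = inv_into P g x"
      define q where "q = inv_into P g y"
      have xB: "x \<in> B" "y \<in> B" using xy by auto
      have pP: "p \<in> P" "q \<in> P" unfolding p_def q_def using xB gP by (auto intro: inv_into_into)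
      have gpq: "g p = x" "g q = y" unfolding p_def q_def using xB gP by (auto intro: f_inv_into_f)
      then have "p \<noteq> q" using xy by auto
      then obtain a where a: "a \<in> L" "p \<in> a" "q \<in> a" using Lex pP by blast
      have "card a = 2" using L2 a by auto
      then obtain u v where "a = {u,v}" by (meson card_2_iff)
      then have "a = {p,q}" using a \<open>p \<noteq> q\<close> by blast
      then have "g ` a = {x,y}" using gpq by auto
      then have "x \<in> \<phi> a" "y \<in> \<phi> a" using F1[OF a(1)] by auto
      moreover have "x \<in> m" "y \<in> m" using xy by auto
      ultimately have "\<phi> a = m" using uniq[rule_format, of "\<phi> a" m x y] F1[OF a(1)] m xy(1) by blast
      then show "m \<in> \<phi> ` L" using a by blast
    qed
  qed
  have adj: "\<phi> a \<inter> \<phi> b = {g p}" if "a \<in> L" "b \<in> L" "a \<noteq> b" "p \<in> a" "p \<in> b" for a b p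
  proof -
    have "g p \<in> \<phi> a" "g p \<in> \<phi> b" using F1 that by auto
    moreover have "\<phi> a \<noteq> \<phi> b" using injphi that by (meson inj_on_contraD)
    moreover have "\<phi> a \<in> L'" "\<phi> b \<in> L'" using F1 that by auto
    ultimately have "z = g p" if "z \<in> \<phi> a" "z \<in> \<phi> b" for z
      using uniq[rule_format, of "\<phi> a" "\<phi> b" "g p" z] that by blast
    then show ?thesis using \<open>g p \<in> \<phi> a\<close> \<open>g p \<in> \<phi> b\<close> by blast
  qed
  have neP: "g ` P \<noteq> P'"
  proof
    assume e: "g ` P = P'"
    obtain l where l: "l \<in> L'" using ne by auto
    then have "l \<subseteq> B" using sub e gP by auto
    then have "B \<inter> l = l" by auto
    then show False using B2 sub l by auto
  qed
  have three: "\<forall>l \<in> L'. \<not> (\<exists>x y z. x \<in> B \<inter> l \<and> y \<in> B \<inter> l \<and> z \<in> B \<inter> l \<and>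
                                  x \<noteq> y \<and> y \<noteq> z \<and> x \<noteq> z)"
  proof (intro ballI notI)
    fix l assume "l \<in> L'"
    then obtain u v where "B \<inter> l = {u,v}" using B2 by (meson card_2_iff)
    moreover assume "\<exists>x y z. x \<in> B \<inter> l \<and> y \<in> B \<inter> l \<and> z \<in> B \<inter> l \<and> x \<noteq> y \<and> y \<noteq> z \<and> x \<noteq> z"
    ultimately show False by (metis insert_iff singletonD)
  qed
  show ?thesis
    apply (rule exI[of _ \<phi>], rule exI[of _ g], rule exI[of _ B])
    apply (intro conjI)
    subgoal using injphi surj by (simp add: bij_betw_def)
    subgoal
    proof (intro ballI impI)
      fix a b assume a: "a \<in> L" and b: "b \<in> L" and "a \<inter> b \<noteq> {}"
      then obtain p where "p \<in> a" "p \<in> b" by blast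
      then have "g p \<in> \<phi> a" "g p \<in> \<phi> b" using F1[OF a] F1[OF b] by blast+
      then show "\<phi> a \<inter> \<phi> b \<noteq> {}" by blast
    qed
    subgoal using adj by blast
    subgoal using ig .
    subgoal using neP .
    subgoal using BP .
    subgoal using three .
    subgoal using B2 by blast
    subgoal using gP .
    done
qed


lemma line_sub:
  assumes "p \<in> aff_points I" "v \<in> aff_points I"
  shows "aff_line p v \<subseteq> aff_points I"
proof
  fix z assume "z \<in> aff_line p v"
  then obtain t where z: "z = (\<lambda>i. p i + t * v i)" by (auto simp: aff_line_def)
  have "{i. z i \<noteq> 0} \<subseteq> {i. p i \<noteq> 0} \<union> {i. v i \<noteq> 0}" using z by auto
  moreover have "finite ({i. p i \<noteq> 0} \<union> {i. v i \<noteq> 0})" using assms by (simp add: aff_points_def)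
  ultimately have "finite {i. z i \<noteq> 0}" by (rule finite_subset)
  moreover have "\<forall>i. i \<notin> I \<longrightarrow> z i = 0" using assms z by (simp add: aff_points_def)
  ultimately show "z \<in> aff_points I" by (simp add: aff_points_def)
qed

lemma line_inf:
  fixes v :: "'i \<Rightarrow> 'f::division_ring"
  assumes "v \<noteq> (\<lambda>_. 0)" "infinite (UNIV::'f set)"
  shows "infinite (aff_line p v)"
proof -
  obtain i where vi: "v i \<noteq> 0" using assms(1) by auto
  have "inj (\<lambda>t. \<lambda>k. p k + t * v k)"
  proof (rule injI)
    fix s t assume "(\<lambda>k. p k + s * v k) = (\<lambda>k. p k + t * v k)"
    then have "p i + s * v i = p i + t * v i" by metis
    then have "(s - t) * v i = 0" by (simp add: algebra_simps)
    then show "s = t" using vi by simp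
  qed
  then have "infinite (range (\<lambda>t. \<lambda>k. p k + t * v k))" using assms(2)
    using finite_imageD by blast
  moreover have "range (\<lambda>t. \<lambda>k. p k + t * v k) = aff_line p v" by (auto simp: aff_line_def)
  ultimately show ?thesis by simp
qed

lemma line_ex:
  fixes x y :: "'i \<Rightarrow> 'f::division_ring"
  assumes "x \<in> aff_points I" "y \<in> aff_points I" "x \<noteq> y"
  shows "\<exists>l\<in>aff_lines I. x \<in> l \<and> y \<in> l"
proof -
  define v where "v = (\<lambda>i. y i - x i)"
  have "{i. v i \<noteq> 0} \<subseteq> {i. x i \<noteq> 0} \<union> {i. y i \<noteq> 0}" unfolding v_def by auto
  moreover have "finite ({i. x i \<noteq> 0} \<union> {i. y i \<noteq> 0})" using assms by (simp add: aff_points_def)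
  ultimately have "finite {i. v i \<noteq> 0}" by (rule finite_subset)
  moreover have "\<forall>i. i \<notin> I \<longrightarrow> v i = 0" using assms unfolding v_def by (simp add: aff_points_def)
  ultimately have vP: "v \<in> aff_points I" by (simp add: aff_points_def)
  have v0: "v \<noteq> (\<lambda>_. 0)"
  proof
    assume "v = (\<lambda>_. 0)"
    then have "\<forall>i. y i = x i" unfolding v_def by (metis eq_iff_diff_eq_0)
    then show False using assms(3) by auto
  qed
  have "aff_line x v \<in> aff_lines I" using vP v0 assms(1) by (auto simp: aff_lines_def)
  moreover have "x \<in> aff_line x v" unfolding aff_line_def by (rule CollectI, rule exI[of _ 0]) simp
  moreover have "y \<in> aff_line x v" unfolding aff_line_def v_def
    by (rule CollectI, rule exI[of _ 1]) simp
  ultimately show ?thesis by blast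
qed

lemma line_eq:
  fixes p v :: "'i \<Rightarrow> 'f::division_ring"
  assumes "x \<in> aff_line p v" "y \<in> aff_line p v" "x \<noteq> y"
  shows "aff_line p v = aff_line x (\<lambda>i. y i - x i)"
proof -
  obtain s where s: "x = (\<lambda>i. p i + s * v i)" using assms(1) by (auto simp: aff_line_def)
  obtain t where t: "y = (\<lambda>i. p i + t * v i)" using assms(2) by (auto simp: aff_line_def)
  have st: "t - s \<noteq> 0" using s t assms(3) by auto
  have d: "y i - x i = (t - s) * v i" for i using s t by (simp add: algebra_simps)
  show ?thesis
  proof
    show "aff_line p v \<subseteq> aff_line x (\<lambda>i. y i - x i)"
    proof
      fix z assume "z \<in> aff_line p v"
      then obtain u where u: "z = (\<lambda>i. p i + u * v i)" by (auto simp: aff_line_def)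
      define r where "r = (u - s) * inverse (t - s)"
      have r: "r * (t - s) = u - s" unfolding r_def using st by (simp add: mult.assoc)
      have "z i = x i + r * (y i - x i)" for i
      proof -
        have "x i + r * (y i - x i) = x i + (r * (t - s)) * v i"
          unfolding d by (simp add: mult.assoc)
        also have "\<dots> = p i + s * v i + (r * (t - s)) * v i" by (simp add: s)
        also have "\<dots> = p i + u * v i" unfolding r by (simp add: algebra_simps)
        finally show ?thesis by (simp add: u)
      qed
      then show "z \<in> aff_line x (\<lambda>i. y i - x i)" unfolding aff_line_def by auto
    qed
    show "aff_line x (\<lambda>i. y i - x i) \<subseteq> aff_line p v"
    proof
      fix z assume "z \<in> aff_line x (\<lambda>i. y i - x i)"
      then obtain r where r: "z = (\<lambda>i. x i + r * (y i - x i))" by (auto simp: aff_line_def)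
      have "z i = p i + (s + r * (t - s)) * v i" for i
      proof -
        have "z i = x i + r * ((t - s) * v i)" by (simp add: r d)
        also have "\<dots> = p i + (s + r * (t - s)) * v i" by (simp add: s algebra_simps)
        finally show ?thesis .
      qed
      then show "z \<in> aff_line p v" unfolding aff_line_def by auto
    qed
  qed
qed

lemma line_uniq:
  fixes l m :: "('i \<Rightarrow> 'f::division_ring) set"
  assumes "l \<in> aff_lines I" "m \<in> aff_lines I" "x \<noteq> y" "x \<in> l" "y \<in> l" "x \<in> m" "y \<in> m"
  shows "l = m"
proof -
  obtain p v where l: "l = aff_line p v" using assms(1) by (auto simp: aff_lines_def)
  obtain q w where m: "m = aff_line q w" using assms(2) by (auto simp: aff_lines_def)
  show ?thesis using line_eq[of x p v y] line_eq[of x q w y] assms l m by simp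
qed

lemma countable_points:
  fixes I :: "nat set"
  assumes "countable (UNIV :: 'f::division_ring set)"
  shows "countable (aff_points I :: (nat \<Rightarrow> 'f) set)"
proof -
  define n where "n x = (SOME n. \<forall>i\<ge>n. x i = (0::'f))" for x :: "nat \<Rightarrow> 'f"
  define h where "h x = map x [0..<n x]" for x :: "nat \<Rightarrow> 'f"
  have nx: "\<forall>i\<ge>n x. x i = 0" if "x \<in> aff_points I" for x
  proof -
    have "finite {i. x i \<noteq> 0}" using that by (simp add: aff_points_def)
    then obtain m where "\<forall>i\<in>{i. x i \<noteq> 0}. i < m" by (auto simp: finite_nat_set_iff_bounded)
    then have "\<exists>m. \<forall>i\<ge>m. x i = 0" by (meson leD mem_Collect_eq)
    then show ?thesis unfolding n_def by (rule someI_ex)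
  qed
  have "inj_on h (aff_points I)"
  proof (rule inj_onI)
    fix x y assume x: "x \<in> aff_points I" and y: "y \<in> aff_points I" and e: "h x = h y"
    then have len: "n x = n y" unfolding h_def by (metis length_map length_upt minus_nat.diff_0)
    show "x = y"
    proof
      fix i show "x i = y i"
      proof (cases "i < n x")
        case True
        then have "map x [0..<n x] ! i = map y [0..<n y] ! i" using e unfolding h_def by simp
        then show ?thesis using True len by simp
      next
        case False
        then show ?thesis using nx[OF x] nx[OF y] len by simp
      qed
    qed
  qed
  moreover have "countable (h ` aff_points I)"
  proof (rule countable_subset)
    show "h ` aff_points I \<subseteq> lists UNIV" by auto
    show "countable (lists (UNIV :: 'f set))" by (rule countable_lists[OF assms])
  qed
  ultimately show ?thesis using countable_image_inj_on by blast
qed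

lemma countable_lines:
  fixes I :: "nat set"
  assumes "countable (UNIV :: 'f::division_ring set)"
  shows "countable (aff_lines I :: (nat \<Rightarrow> 'f) set set)"
proof -
  have "(aff_lines I :: (nat \<Rightarrow> 'f) set set) \<subseteq> (\<lambda>(p,v). aff_line p v) ` ((aff_points I :: (nat \<Rightarrow> 'f) set) \<times> (aff_points I :: (nat \<Rightarrow> 'f) set))"
    by (auto simp: aff_lines_def)
  moreover have "countable ((aff_points I :: (nat \<Rightarrow> 'f) set) \<times> (aff_points I :: (nat \<Rightarrow> 'f) set))"
  proof -
    have cp: "countable (aff_points I :: (nat \<Rightarrow> 'f) set)" by (rule countable_points[OF assms])
    show ?thesis by (rule countable_SIGMA[OF cp cp])
  qed
  ultimately show ?thesis by (meson countable_image countable_subset)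
qed

lemma bit_line_card:
  fixes v :: "'i \<Rightarrow> bit"
  assumes "v \<noteq> (\<lambda>_. 0)"
  shows "card (aff_line p v) = 2"
proof -
  have "aff_line p v = {p, (\<lambda>i. p i + v i)}"
  proof
    show "aff_line p v \<subseteq> {p, (\<lambda>i. p i + v i)}"
    proof
      fix z assume "z \<in> aff_line p v"
      then obtain t where z: "z = (\<lambda>i. p i + t * v i)" by (auto simp: aff_line_def)
      have "t = 0 \<or> t = 1" by (cases t) simp_all
      then have "z = p \<or> z = (\<lambda>i. p i + v i)"
      proof
        assume "t = 0" then have "z = (\<lambda>i. p i + 0 * v i)" using z by simp
        then show ?thesis by (simp only: mult_zero_left add_0_right simp_thms)
      next
        assume "t = 1" then have "z = (\<lambda>i. p i + 1 * v i)" using z by simp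
        then show ?thesis by (simp only: mult_1_left simp_thms)
      qed
      then show "z \<in> {p, (\<lambda>i. p i + v i)}" by blast
    qed
    have "p \<in> aff_line p v" unfolding aff_line_def
      by (rule CollectI, rule exI[of _ "0::bit"]) (simp only: mult_zero_left add_0_right simp_thms)
    moreover have "(\<lambda>i. p i + v i) \<in> aff_line p v" unfolding aff_line_def
      by (rule CollectI, rule exI[of _ "1::bit"]) (simp only: mult_1_left simp_thms)
    ultimately show "{p, (\<lambda>i. p i + v i)} \<subseteq> aff_line p v" by blast
  qed
  moreover have "p \<noteq> (\<lambda>i. p i + v i)"
  proof
    assume "p = (\<lambda>i. p i + v i)"
    then have "\<forall>i. v i = 0" by (metis add_cancel_right_right)
    then show False using assms by auto
  qed
  ultimately show ?thesis by simp
qed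

lemma bit_points_inf: "infinite (aff_points (UNIV::nat set) :: (nat \<Rightarrow> bit) set)"
proof -
  define e where "e k = (\<lambda>i. if i = k then (1::bit) else 0)" for k :: nat
  have "inj e" unfolding e_def by (rule injI) (metis zero_neq_one)
  moreover have "range e \<subseteq> aff_points UNIV"
    unfolding e_def aff_points_def by auto
  ultimately show ?thesis by (meson finite_imageD finite_subset infinite_UNIV_nat)
qed

lemma lines_inf:
  fixes I :: "nat set"
  assumes "i \<in> I" "j \<in> I" "i \<noteq> j" "infinite (UNIV :: 'f::division_ring set)"
  shows "infinite (aff_lines I :: (nat \<Rightarrow> 'f) set set)"
proof -
  have ji: "j \<noteq> i" using assms(3) by simp
  define q where "q s = (\<lambda>k. if k = i then (1::'f) else if k = j then s else 0)" for s :: 'f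
  define l where "l s = aff_line (\<lambda>_. 0) (q s)" for s
  have qi: "q s i = 1" for s unfolding q_def by simp
  have qj: "q s j = s" for s unfolding q_def using ji by simp
  have qP: "q s \<in> aff_points I" for s
  proof -
    have "{k. q s k \<noteq> 0} \<subseteq> {i, j}" unfolding q_def by auto
    then have "finite {k. q s k \<noteq> 0}" by (rule finite_subset) simp
    moreover have "\<forall>k. k \<notin> I \<longrightarrow> q s k = 0"
    proof (intro allI impI)
      fix k assume "k \<notin> I"
      then have "k \<noteq> i" "k \<noteq> j" using assms(1,2) by auto
      then show "q s k = 0" unfolding q_def by simp
    qed
    ultimately show ?thesis unfolding aff_points_def by blast
  qed
  have z: "(\<lambda>_. 0::'f) \<in> aff_points I" by (simp add: aff_points_def)
  have q0: "q s \<noteq> (\<lambda>_. 0)" for s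
  proof
    assume "q s = (\<lambda>_. 0)"
    then have "q s i = 0" by simp
    then show False using qi by simp
  qed
  have "inj l"
  proof (rule injI)
    fix s s' assume e: "l s = l s'"
    have "q s = (\<lambda>k. 0 + 1 * q s k)" by simp
    then have "q s \<in> l s" unfolding l_def aff_line_def by blast
    then have "q s \<in> l s'" using e by simp
    then obtain t where t: "q s = (\<lambda>k. 0 + t * q s' k)" unfolding l_def aff_line_def by auto
    have "q s i = 0 + t * q s' i" "q s j = 0 + t * q s' j" using fun_cong[OF t, of i] fun_cong[OF t, of j] by simp_all
    then have "1 = t" "s = t * s'" using qi qj by simp_all
    then show "s = s'" by simp
  qed
  moreover have "range l \<subseteq> aff_lines I"
  proof
    fix x assume "x \<in> range l"
    then obtain s where "x = aff_line (\<lambda>_. 0) (q s)" unfolding l_def by blast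
    then show "x \<in> aff_lines I" unfolding aff_lines_def using qP[of s] q0[of s] z by blast
  qed
  moreover have "infinite (range l)" using finite_imageD[OF _ \<open>inj l\<close>] assms(4) by blast
  ultimately show ?thesis using finite_subset by blast
qed

theorem mainTheorem6:
  fixes I' :: "nat set"
  assumes "countable (UNIV :: 'f::division_ring set)"
      and "infinite (UNIV :: 'f set)"
      and "infinite I' \<or> card I' \<ge> 3"
  shows "\<exists>(\<phi> :: (nat \<Rightarrow> bit) set \<Rightarrow> (nat \<Rightarrow> 'f) set) (lam :: (nat \<Rightarrow> bit) \<Rightarrow> (nat \<Rightarrow> 'f)) B'.
     bij_betw \<phi> (aff_lines (UNIV :: nat set)) (aff_lines I') \<and>
     (\<forall>a \<in> aff_lines UNIV. \<forall>b \<in> aff_lines UNIV. a \<inter> b \<noteq> {} \<longrightarrow> \<phi> a \<inter> \<phi> b \<noteq> {}) \<and>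
     (\<forall>a \<in> aff_lines UNIV. \<forall>b \<in> aff_lines UNIV. \<forall>p. a \<noteq> b \<and> p \<in> a \<and> p \<in> b \<longrightarrow>
          \<phi> a \<inter> \<phi> b = {lam p}) \<and>
     inj_on lam (aff_points UNIV) \<and>
     lam ` aff_points UNIV \<noteq> aff_points I' \<and>
     B' \<subseteq> aff_points I' \<and>
     (\<forall>l \<in> aff_lines I'. \<not> (\<exists>x y z. x \<in> B' \<inter> l \<and> y \<in> B' \<inter> l \<and> z \<in> B' \<inter> l \<and>
                                  x \<noteq> y \<and> y \<noteq> z \<and> x \<noteq> z)) \<and>
     (\<forall>l \<in> aff_lines I'. card (B' \<inter> l) = 2) \<and>
     lam ` aff_points UNIV = B'"
proof -
  have "\<exists>T\<subseteq>I'. card T = 2"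
  proof (cases "finite I'")
    case True
    then have "2 \<le> card I'" using assms(3) by simp
    then show ?thesis using obtain_subset_with_card_n by metis
  next
    case False
    then obtain T where "T \<subseteq> I'" "finite T" "card T = 2" using infinite_arbitrarily_large by blast
    then show ?thesis by blast
  qed
  then obtain T where T: "T \<subseteq> I'" "card T = 2" by blast
  then obtain i j where ij: "i \<noteq> j" "T = {i, j}" by (meson card_2_iff)
  have iI: "i \<in> I'" "j \<in> I'" using T ij by auto
  have bitU: "(UNIV :: bit set) = {0, 1}"
  proof -
    have "x = 0 \<or> x = 1" for x :: bit by (cases x) simp_all
    then show ?thesis by blast
  qed
  have cbit: "countable (UNIV :: bit set)" by (simp add: bitU)
  have L2: "\<forall>a\<in>(aff_lines UNIV :: (nat \<Rightarrow> bit) set set). a \<subseteq> aff_points UNIV \<and> card a = 2"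
  proof
    fix a assume "a \<in> (aff_lines UNIV :: (nat \<Rightarrow> bit) set set)"
    then obtain p v where "a = aff_line p v" "p \<in> aff_points UNIV" "v \<in> aff_points UNIV" "v \<noteq> (\<lambda>_. 0)"
      unfolding aff_lines_def by blast
    then show "a \<subseteq> aff_points UNIV \<and> card a = 2" using line_sub bit_line_card by metis
  qed
  have Lex: "\<forall>p\<in>(aff_points UNIV :: (nat \<Rightarrow> bit) set). \<forall>q\<in>aff_points UNIV. p \<noteq> q \<longrightarrow>
      (\<exists>a\<in>aff_lines UNIV. p \<in> a \<and> q \<in> a)"
    using line_ex by blast
  have sub: "\<forall>l\<in>(aff_lines I' :: (nat \<Rightarrow> 'f) set set). l \<subseteq> aff_points I' \<and> infinite l"
  proof
    fix l assume "l \<in> (aff_lines I' :: (nat \<Rightarrow> 'f) set set)"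
    then obtain p v where "l = aff_line p v" "p \<in> aff_points I'" "v \<in> aff_points I'" "v \<noteq> (\<lambda>_. 0)"
      unfolding aff_lines_def by blast
    then show "l \<subseteq> aff_points I' \<and> infinite l" using line_sub line_inf assms(2) by metis
  qed
  have ex': "\<forall>x\<in>(aff_points I' :: (nat \<Rightarrow> 'f) set). \<forall>y\<in>aff_points I'. x \<noteq> y \<longrightarrow>
      (\<exists>l\<in>aff_lines I'. x \<in> l \<and> y \<in> l)"
    using line_ex by blast
  have uniq: "\<forall>l\<in>(aff_lines I' :: (nat \<Rightarrow> 'f) set set). \<forall>m\<in>aff_lines I'. \<forall>x y.
      x \<noteq> y \<and> x \<in> l \<and> y \<in> l \<and> x \<in> m \<and> y \<in> m \<longrightarrow> l = m"
    using line_uniq by blast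
  show ?thesis
    by (rule abstract_main[OF L2 Lex countable_points[OF cbit] bit_points_inf sub ex' uniq
          countable_lines[OF assms(1)] lines_inf[OF iI ij(1) assms(2)]])
qed

end
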